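(* Let $G$ be an execution graph, $T$ a thread, and $q$ such that the await iterations $q$ and $q+1$ of $T$ in $G$ exist. Then $\mathit{end}_G^T(q)<\mathit{start}_G^T(q+1)$.
   Context: Programs. There are finite sets $\mathit{Register}$, $\mathit{Value}$, $\mathit{Location}$; $\mathit{State}=\mathit{Register}\to\mathit{Value}$; an update is a partial map $\mathit{Register}\rightharpoonup\mathit{Value}$, and $(\sigma\ll\mu)(r)=\mu(r)$ if $r\in\mathrm{Dom}(\mu)$, else $\sigma(r)$. Events are reads $R^m(x)$, writes $W^m(x,v)$, fences $F^m$, error $E$. A program consists of finitely many threads $T$, each with a finite statement sequence $P_T(0),\dots,P_T(|P_T|-1)$. A statement is $\mathtt{step}(\epsilon,\delta)$ with $\epsilon:\mathit{State}\to\mathit{Event}$, $\delta:\mathit{State}\times(\mathit{Value}\cup\{\bot\})\to\mathit{Update}$, or $\mathtt{await}(n,\kappa)$ with $n\in\mathbb N$, $\kappa:\mathit{State}\to\{0,1\}$. Syntactic restriction: if $P_T(k)=\mathtt{await}(n,\cdot)$ then $n\le k$ and no $P_T(k')$ with $k'\in[k-n:k)$ is an await. ($[a:b)=\{a,\dots,b-1\}$.) An execution graph $G$ has a set $G.\mathrm E$ of triples $\langle T,t,e\rangle$ and a partial reads-from map $G.\mathrm{rf}$ from reads to writes. Thread-local semantics: $k_G^T(0)=0$, $\sigma_G^T(0)$ fixed; if $k_G^T(t)\ge|P_T|$ or no triple $\langle T,t,\cdot\rangle$ is in $G.\mathrm E$, execution stops ($N_G^T=t$). Otherwise with $S=P_T(k_G^T(t))$: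 $e_G^T(t)=\epsilon(\sigma_G^T(t))$ for $S=\mathtt{step}(\epsilon,\cdot)$, $F^{\mathrm{rlx}}$ for an await; $v_G^T(t)$ is the value of the write that $G.\mathrm{rf}$ assigns to $\langle T,t,e_G^T(t)\rangle$ if this is a read with defined rf, else $\bot$. For a step: $k_G^T(t+1)=k_G^T(t)+1$; if $e_G^T(t)$ is a read with $v_G^T(t)=\bot$ then $N_G^T=t+1$, $\sigma_G^T(t+1)=\sigma_G^T(t)$, else $\sigma_G^T(t+1)=\sigma_G^T(t)\ll\delta(\sigma_G^T(t),v_G^T(t))$. For $\mathtt{await}(n,\kappa)$: $\sigma_G^T(t+1)=\sigma_G^T(t)$ and $k_G^T(t+1)=k_G^T(t)+1$ if $\kappa(\sigma_G^T(t))=0$, else $k_G^T(t)-n$. Awaits: $\mathit{end}_G^T(0)<\mathit{end}_G^T(1)<\cdots$ enumerate the steps $t$ (with $t<N_G^T$) at which $P_T(k_G^T(t))$ is an await; $\mathit{len}_G^T(q)=n$ where $P_T(k_G^T(\mathit{end}_G^T(q)))=\mathtt{await}(n,\cdot)$; $\mathit{start}_G^T(q)=\mathit{end}_G^T(q)-\mathit{len}_G^T(q)$. *)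

theory Defs
  imports Main
begin

text \<open>Events: reads R^m(x), writes W^m(x,v), fences F^m, error E.
  The set of access modes is a type parameter 'm; the relaxed mode rlx is a parameter.\<close>
datatype ('m, 'l, 'v) event =
    Read 'm 'l
  | Write 'm 'l 'v
  | Fence 'm
  | Err

fun is_read :: "('m, 'l, 'v) event \<Rightarrow> bool" where
  "is_read (Read _ _) = True"
| "is_read _ = False"

type_synonym ('r, 'v) state = "'r \<Rightarrow> 'v"
type_synonym ('r, 'v) update = "'r \<Rightarrow> 'v option"

definition upd_state :: "('r, 'v) state \<Rightarrow> ('r, 'v) update \<Rightarrow> ('r, 'v) state" (infixl "\<lless>" 65) where
  "\<sigma> \<lless> \<mu> = (\<lambda>r. case \<mu> r of Some v \<Rightarrow> v | None \<Rightarrow> \<sigma> r)"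

text \<open>Statements: step(epsilon, delta) and await(n, kappa); the value bottom is None.\<close>
datatype ('r, 'v, 'm, 'l) stmt =
    Step "('r, 'v) state \<Rightarrow> ('m, 'l, 'v) event" "('r, 'v) state \<Rightarrow> 'v option \<Rightarrow> ('r, 'v) update"
  | Await nat "('r, 'v) state \<Rightarrow> bool"

fun is_await :: "('r, 'v, 'm, 'l) stmt \<Rightarrow> bool" where
  "is_await (Await _ _) = True"
| "is_await (Step _ _) = False"

type_synonym ('th, 'r, 'v, 'm, 'l) program = "'th \<Rightarrow> ('r, 'v, 'm, 'l) stmt list"

definition wf_program :: "('th, 'r, 'v, 'm, 'l) program \<Rightarrow> bool" where
  "wf_program P \<longleftrightarrow> (\<forall>T k n \<kappa>. k < length (P T) \<longrightarrow> P T ! k = Await n \<kappa> \<longrightarrow>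
      n \<le> k \<and> (\<forall>k' \<in> {k - n..<k}. \<not> is_await (P T ! k')))"

record ('th, 'm, 'l, 'v) exec_graph =
  events :: "('th \<times> nat \<times> ('m, 'l, 'v) event) set"
  rf :: "('th \<times> nat \<times> ('m, 'l, 'v) event) \<Rightarrow> ('th \<times> nat \<times> ('m, 'l, 'v) event) option"

fun write_val :: "('m, 'l, 'v) event \<Rightarrow> 'v option" where
  "write_val (Write _ _ v) = Some v"
| "write_val _ = None"

definition cur_event :: "'m \<Rightarrow> ('r, 'v, 'm, 'l) stmt \<Rightarrow> ('r, 'v) state \<Rightarrow> ('m, 'l, 'v) event" where
  "cur_event rlx S \<sigma> = (case S of Step \<epsilon> \<delta> \<Rightarrow> \<epsilon> \<sigma> | Await n \<kappa> \<Rightarrow> Fence rlx)"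

definition read_val :: "('th, 'm, 'l, 'v, 'z) exec_graph_scheme \<Rightarrow> 'th \<Rightarrow> nat \<Rightarrow> ('m, 'l, 'v) event \<Rightarrow> 'v option" where
  "read_val G T t e = (if is_read e then (case rf G (T, t, e) of Some (_, _, w) \<Rightarrow> write_val w | None \<Rightarrow> None) else None)"

definition active :: "('th, 'r, 'v, 'm, 'l) program \<Rightarrow> ('th, 'm, 'l, 'v, 'z) exec_graph_scheme \<Rightarrow> 'th \<Rightarrow> nat \<Rightarrow> nat \<Rightarrow> bool" where
  "active P G T t k \<longleftrightarrow> k < length (P T) \<and> (\<exists>e. (T, t, e) \<in> events G)"

text \<open>Thread-local configuration at step t: (k_G^T(t), sigma_G^T(t), not-yet-stopped).\<close>
primrec cfg :: "'m \<Rightarrow> ('th, 'r, 'v, 'm, 'l) program \<Rightarrow> ('th \<Rightarrow> ('r, 'v) state) \<Rightarrow>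
    ('th, 'm, 'l, 'v, 'z) exec_graph_scheme \<Rightarrow> 'th \<Rightarrow> nat \<Rightarrow> nat \<times> ('r, 'v) state \<times> bool" where
  "cfg rlx P \<sigma>0 G T 0 = (0, \<sigma>0 T, True)"
| "cfg rlx P \<sigma>0 G T (Suc t) =
    (case cfg rlx P \<sigma>0 G T t of (k, \<sigma>, alive) \<Rightarrow>
      if \<not> alive \<or> \<not> active P G T t k then (k, \<sigma>, False)
      else (case P T ! k of
              Step \<epsilon> \<delta> \<Rightarrow>
                (let e = \<epsilon> \<sigma>; v = read_val G T t e in
                 if is_read e \<and> v = None then (k + 1, \<sigma>, False)
                 else (k + 1, \<sigma> \<lless> \<delta> \<sigma> v, True))
            | Await n \<kappa> \<Rightarrow> (if \<kappa> \<sigma> then (k - n, \<sigma>, True) else (k + 1, \<sigma>, True))))"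

definition pc :: "'m \<Rightarrow> ('th, 'r, 'v, 'm, 'l) program \<Rightarrow> ('th \<Rightarrow> ('r, 'v) state) \<Rightarrow>
    ('th, 'm, 'l, 'v, 'z) exec_graph_scheme \<Rightarrow> 'th \<Rightarrow> nat \<Rightarrow> nat" where
  "pc rlx P \<sigma>0 G T t = fst (cfg rlx P \<sigma>0 G T t)"

text \<open>t < N_G^T: step t is actually executed by thread T.\<close>
definition running :: "'m \<Rightarrow> ('th, 'r, 'v, 'm, 'l) program \<Rightarrow> ('th \<Rightarrow> ('r, 'v) state) \<Rightarrow>
    ('th, 'm, 'l, 'v, 'z) exec_graph_scheme \<Rightarrow> 'th \<Rightarrow> nat \<Rightarrow> bool" where
  "running rlx P \<sigma>0 G T t \<longleftrightarrow> snd (snd (cfg rlx P \<sigma>0 G T t)) \<and> active P G T t (pc rlx P \<sigma>0 G T t)"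

definition await_step :: "'m \<Rightarrow> ('th, 'r, 'v, 'm, 'l) program \<Rightarrow> ('th \<Rightarrow> ('r, 'v) state) \<Rightarrow>
    ('th, 'm, 'l, 'v, 'z) exec_graph_scheme \<Rightarrow> 'th \<Rightarrow> nat \<Rightarrow> bool" where
  "await_step rlx P \<sigma>0 G T t \<longleftrightarrow> running rlx P \<sigma>0 G T t \<and> is_await (P T ! pc rlx P \<sigma>0 G T t)"

text \<open>t is the q-th await step (0-based): end_G^T(q) = t.\<close>
definition is_end :: "'m \<Rightarrow> ('th, 'r, 'v, 'm, 'l) program \<Rightarrow> ('th \<Rightarrow> ('r, 'v) state) \<Rightarrow>
    ('th, 'm, 'l, 'v, 'z) exec_graph_scheme \<Rightarrow> 'th \<Rightarrow> nat \<Rightarrow> nat \<Rightarrow> bool" where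
  "is_end rlx P \<sigma>0 G T q t \<longleftrightarrow> await_step rlx P \<sigma>0 G T t \<and>
      card {t'. t' < t \<and> await_step rlx P \<sigma>0 G T t'} = q"

definition await_exists :: "'m \<Rightarrow> ('th, 'r, 'v, 'm, 'l) program \<Rightarrow> ('th \<Rightarrow> ('r, 'v) state) \<Rightarrow>
    ('th, 'm, 'l, 'v, 'z) exec_graph_scheme \<Rightarrow> 'th \<Rightarrow> nat \<Rightarrow> bool" where
  "await_exists rlx P \<sigma>0 G T q \<longleftrightarrow> (\<exists>t. is_end rlx P \<sigma>0 G T q t)"

definition end_aw :: "'m \<Rightarrow> ('th, 'r, 'v, 'm, 'l) program \<Rightarrow> ('th \<Rightarrow> ('r, 'v) state) \<Rightarrow>
    ('th, 'm, 'l, 'v, 'z) exec_graph_scheme \<Rightarrow> 'th \<Rightarrow> nat \<Rightarrow> nat" where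
  "end_aw rlx P \<sigma>0 G T q = (THE t. is_end rlx P \<sigma>0 G T q t)"

fun await_len :: "('r, 'v, 'm, 'l) stmt \<Rightarrow> nat" where
  "await_len (Await n _) = n"
| "await_len (Step _ _) = 0"

definition len_aw :: "'m \<Rightarrow> ('th, 'r, 'v, 'm, 'l) program \<Rightarrow> ('th \<Rightarrow> ('r, 'v) state) \<Rightarrow>
    ('th, 'm, 'l, 'v, 'z) exec_graph_scheme \<Rightarrow> 'th \<Rightarrow> nat \<Rightarrow> nat" where
  "len_aw rlx P \<sigma>0 G T q = await_len (P T ! pc rlx P \<sigma>0 G T (end_aw rlx P \<sigma>0 G T q))"

definition start_aw :: "'m \<Rightarrow> ('th, 'r, 'v, 'm, 'l) program \<Rightarrow> ('th \<Rightarrow> ('r, 'v) state) \<Rightarrow>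
    ('th, 'm, 'l, 'v, 'z) exec_graph_scheme \<Rightarrow> 'th \<Rightarrow> nat \<Rightarrow> nat" where
  "start_aw rlx P \<sigma>0 G T q = end_aw rlx P \<sigma>0 G T q - len_aw rlx P \<sigma>0 G T q"

end

theory Submission
  imports Defs
begin

lemma pc_Suc:
  assumes "running rlx P \<sigma>0 G T t"
  shows "pc rlx P \<sigma>0 G T (Suc t) = (case P T ! pc rlx P \<sigma>0 G T t of Step e d \<Rightarrow> pc rlx P \<sigma>0 G T t + 1
     | Await n \<kappa> \<Rightarrow> if \<kappa> (fst (snd (cfg rlx P \<sigma>0 G T t))) then pc rlx P \<sigma>0 G T t - n else pc rlx P \<sigma>0 G T t + 1)"
proof -
  obtain k s a where c: "cfg rlx P \<sigma>0 G T t = (k, s, a)" by (metis prod.exhaust)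
  show ?thesis using assms c
    by (auto simp: running_def pc_def Let_def split: stmt.split)
qed

lemma running_Suc:
  assumes "running rlx P \<sigma>0 G T (Suc t)"
  shows "running rlx P \<sigma>0 G T t"
proof -
  obtain k s a where c: "cfg rlx P \<sigma>0 G T t = (k, s, a)" by (metis prod.exhaust)
  show ?thesis using assms c
    by (auto simp: running_def pc_def Let_def split: stmt.splits if_splits)
qed

lemma running_le:
  assumes "running rlx P \<sigma>0 G T t" "t' \<le> t"
  shows "running rlx P \<sigma>0 G T t'"
  using assms
proof (induction t)
  case 0 then show ?case by simp
next
  case (Suc t)
  then show ?case using running_Suc by (metis le_Suc_eq)
qed

lemma pc_step:
  assumes "running rlx P \<sigma>0 G T t" "\<not> await_step rlx P \<sigma>0 G T t"
  shows "pc rlx P \<sigma>0 G T (Suc t) = Suc (pc rlx P \<sigma>0 G T t)"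
  using assms pc_Suc[OF assms(1)] by (auto simp: await_step_def split: stmt.splits)

lemma pc_await:
  assumes "running rlx P \<sigma>0 G T t" "P T ! pc rlx P \<sigma>0 G T t = Await n \<kappa>"
  shows "pc rlx P \<sigma>0 G T (Suc t) = Suc (pc rlx P \<sigma>0 G T t) \<or>
         pc rlx P \<sigma>0 G T (Suc t) = pc rlx P \<sigma>0 G T t - n"
  using assms pc_Suc[OF assms(1)] by auto

lemma pc_run:
  assumes "running rlx P \<sigma>0 G T (t + j)" "\<forall>i<j. \<not> await_step rlx P \<sigma>0 G T (t + i)"
  shows "pc rlx P \<sigma>0 G T (t + j) = pc rlx P \<sigma>0 G T t + j"
  using assms
proof (induction j)
  case 0 then show ?case by simp
next
  case (Suc j)
  have r: "running rlx P \<sigma>0 G T (t + j)" using Suc.prems(1) running_Suc by simp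
  have "pc rlx P \<sigma>0 G T (Suc (t + j)) = Suc (pc rlx P \<sigma>0 G T (t + j))"
    using pc_step[OF r] Suc.prems(2) by simp
  then show ?case using Suc.IH r Suc.prems(2) by simp
qed

lemma card_lt_mono:
  fixes a b :: nat
  assumes "a < b" "Q a"
  shows "card {t. t < a \<and> Q t} < card {t. t < b \<and> Q t}"
proof -
  have "{t. t < a \<and> Q t} \<subset> {t. t < b \<and> Q t}" using assms by auto
  moreover have "finite {t. t < b \<and> Q t}" by simp
  ultimately show ?thesis by (simp add: psubset_card_mono)
qed

lemma card_le_mono:
  fixes a b :: nat
  assumes "a \<le> b"
  shows "card {t. t < a \<and> Q t} \<le> card {t. t < b \<and> Q t}"
proof -
  have "{t. t < a \<and> Q t} \<subseteq> {t. t < b \<and> Q t}" using assms by auto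
  moreover have "finite {t. t < b \<and> Q t}" by simp
  ultimately show ?thesis by (simp add: card_mono)
qed

lemma is_end_unique:
  assumes "is_end rlx P \<sigma>0 G T q t" "is_end rlx P \<sigma>0 G T q t'"
  shows "t = t'"
proof (rule ccontr)
  assume "t \<noteq> t'"
  then consider "t < t'" | "t' < t" by linarith
  then show False
  proof cases
    case 1 then show False using assms card_lt_mono[of t t' "await_step rlx P \<sigma>0 G T"]
      by (auto simp: is_end_def)
  next
    case 2 then show False using assms card_lt_mono[of t' t "await_step rlx P \<sigma>0 G T"]
      by (auto simp: is_end_def)
  qed
qed

lemma end_aw_eq:
  assumes "is_end rlx P \<sigma>0 G T q t"
  shows "end_aw rlx P \<sigma>0 G T q = t"
  unfolding end_aw_def using assms is_end_unique by (metis the_equality)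

theorem lemma3:
  fixes rlx :: 'm
    and P :: "('th::finite, 'r::finite, 'v::finite, 'm, 'l::finite) program"
    and \<sigma>0 :: "'th \<Rightarrow> ('r, 'v) state"
    and G :: "('th, 'm, 'l, 'v) exec_graph"
    and T :: 'th and q :: nat
  assumes "wf_program P"
    and "await_exists rlx P \<sigma>0 G T q"
    and "await_exists rlx P \<sigma>0 G T (Suc q)"
  shows "end_aw rlx P \<sigma>0 G T q < start_aw rlx P \<sigma>0 G T (Suc q)"
proof -
  let ?A = "await_step rlx P \<sigma>0 G T"
  let ?pc = "pc rlx P \<sigma>0 G T"
  obtain t1 where e1: "is_end rlx P \<sigma>0 G T q t1" using assms(2) await_exists_def by metis
  obtain t2 where e2: "is_end rlx P \<sigma>0 G T (Suc q) t2" using assms(3) await_exists_def by metis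
  have E1: "end_aw rlx P \<sigma>0 G T q = t1" by (rule end_aw_eq[OF e1])
  have E2: "end_aw rlx P \<sigma>0 G T (Suc q) = t2" by (rule end_aw_eq[OF e2])
  have lt: "t1 < t2"
  proof (rule ccontr)
    assume "\<not> t1 < t2"
    then have "card {t. t < t2 \<and> ?A t} \<le> card {t. t < t1 \<and> ?A t}" by (intro card_le_mono) simp
    then show False using e1 e2 by (simp add: is_end_def)
  qed
  have noaw: "\<not> ?A t" if "t1 < t" "t < t2" for t
  proof
    assume a: "?A t"
    have c1: "card {t'. t' < t1 \<and> ?A t'} < card {t'. t' < t \<and> ?A t'}"
      using card_lt_mono[of t1 t ?A] that e1 by (simp add: is_end_def)
    have c2: "card {t'. t' < t \<and> ?A t'} < card {t'. t' < t2 \<and> ?A t'}" using card_lt_mono[of t t2 ?A] that a by simp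
    show False using e1 e2 c1 c2 unfolding is_end_def by linarith
  qed
  have r1: "running rlx P \<sigma>0 G T t1" and aw1: "is_await (P T ! ?pc t1)"
    using e1 by (auto simp: is_end_def await_step_def)
  have r2: "running rlx P \<sigma>0 G T t2" and aw2: "is_await (P T ! ?pc t2)"
    using e2 by (auto simp: is_end_def await_step_def)
  obtain n1 \<kappa>1 where k1: "P T ! ?pc t1 = Await n1 \<kappa>1" using aw1 by (cases "P T ! ?pc t1") auto
  obtain n \<kappa> where k2: "P T ! ?pc t2 = Await n \<kappa>" using aw2 by (cases "P T ! ?pc t2") auto
  have len1: "?pc t1 < length (P T)" using r1 by (simp add: running_def active_def)
  have len2: "?pc t2 < length (P T)" using r2 by (simp add: running_def active_def)
  have wf1: "n1 \<le> ?pc t1" "\<forall>k'\<in>{?pc t1 - n1..<?pc t1}. \<not> is_await (P T ! k')"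
    using assms(1) len1 k1 unfolding wf_program_def by blast+
  have wf2: "n \<le> ?pc t2" "\<forall>k'\<in>{?pc t2 - n..<?pc t2}. \<not> is_await (P T ! k')"
    using assms(1) len2 k2 unfolding wf_program_def by blast+
  define d where "d = t2 - Suc t1"
  have t2d: "t2 = Suc t1 + d" using lt d_def by simp
  have pcd: "?pc t2 = ?pc (Suc t1) + d"
    using pc_run[of rlx P \<sigma>0 G T "Suc t1" d] r2 noaw t2d by auto
  have "t1 + n < t2"
  proof (rule ccontr)
    assume "\<not> t1 + n < t2"
    then have dn: "d < n" using t2d by simp
    from pc_await[OF r1 k1] show False
    proof
      assume "?pc (Suc t1) = Suc (?pc t1)"
      then have "?pc t1 \<in> {?pc t2 - n..<?pc t2}" using pcd dn by auto
      then show False using wf2 aw1 by blast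
    next
      assume h: "?pc (Suc t1) = ?pc t1 - n1"
      show False
      proof (cases "?pc t2 < ?pc t1")
        case True
        then have "?pc t2 \<in> {?pc t1 - n1..<?pc t1}" using pcd h by auto
        then show False using wf1 aw2 by blast
      next
        case False
        show False
        proof (cases "?pc t2 = ?pc t1")
          case True
          then have "n = n1" using k1 k2 by simp
          moreover have "d = n1" using True pcd h wf1 by simp
          ultimately show False using dn by simp
        next
          case False
          then have "?pc t1 \<in> {?pc t2 - n..<?pc t2}" using \<open>\<not> ?pc t2 < ?pc t1\<close> pcd h wf1 dn by auto
          then show False using wf2 aw1 by blast
        qed
      qed
    qed
  qed
  then show ?thesis unfolding start_aw_def len_aw_def E1 E2 using k2 by simp
qed

end
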